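(* Let $G$ be a finite simple graph on the vertex set $V(G)=\{x_{11},\ldots,x_{n1}\}$ with no isolated vertex. Let $G_1,\ldots,G_n$ be connected finite simple graphs on vertex sets $V(G_i)=\{x_{i1},\ldots,x_{im_i}\}$ with $m_i\geq 2$ for every $i$, where the sets $V(G_i)\setminus\{x_{i1}\}$ are pairwise disjoint and disjoint from $V(G)$. Let $G(G_1,\ldots,G_n)$ be the graph obtained by attaching $G_i$ to $G$ at $x_{i1}$ for every $i$. Then $G(G_1,\ldots,G_n)$ is unmixed if and only if $G_i$ and $G_i\setminus\{x_{i1}\}$ are unmixed for every $i=1,\ldots,n$.
   Context: $G(G_1,\ldots,G_n)$ has vertex set $\bigcup_i V(G_i)$ and edge set $E(G)\cup\bigcup_i E(G_i)$. For a vertex $v$, $H\setminus\{v\}$ denotes the induced subgraph on $V(H)\setminus\{v\}$. A graph is unmixed if all its maximal independent sets have the same cardinality. *)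

theory Defs
  imports Main
begin

definition simple_graph :: "'a set \<Rightarrow> 'a set set \<Rightarrow> bool" where
  "simple_graph V E \<longleftrightarrow> finite V \<and> (\<forall>e\<in>E. e \<subseteq> V \<and> card e = 2)"

definition adjacent :: "'a set set \<Rightarrow> 'a \<Rightarrow> 'a \<Rightarrow> bool" where
  "adjacent E u v \<longleftrightarrow> {u, v} \<in> E"

definition connected_graph :: "'a set \<Rightarrow> 'a set set \<Rightarrow> bool" where
  "connected_graph V E \<longleftrightarrow> V \<noteq> {} \<and>
     (\<forall>u\<in>V. \<forall>v\<in>V. (\<lambda>x y. adjacent E x y \<and> x \<in> V \<and> y \<in> V)\<^sup>*\<^sup>* u v)"

definition no_isolated_vertex :: "'a set \<Rightarrow> 'a set set \<Rightarrow> bool" where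
  "no_isolated_vertex V E \<longleftrightarrow> (\<forall>v\<in>V. \<exists>e\<in>E. v \<in> e)"

definition independent_set :: "'a set \<Rightarrow> 'a set set \<Rightarrow> 'a set \<Rightarrow> bool" where
  "independent_set V E S \<longleftrightarrow> S \<subseteq> V \<and> (\<forall>e\<in>E. \<not> e \<subseteq> S)"

definition maximal_independent_set :: "'a set \<Rightarrow> 'a set set \<Rightarrow> 'a set \<Rightarrow> bool" where
  "maximal_independent_set V E S \<longleftrightarrow> independent_set V E S \<and>
     (\<forall>T. independent_set V E T \<and> S \<subseteq> T \<longrightarrow> T = S)"

definition unmixed :: "'a set \<Rightarrow> 'a set set \<Rightarrow> bool" where
  "unmixed V E \<longleftrightarrow> (\<forall>S T. maximal_independent_set V E S \<and> maximal_independent_set V E T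
      \<longrightarrow> card S = card T)"

definition del_vertex_V :: "'a set \<Rightarrow> 'a \<Rightarrow> 'a set" where
  "del_vertex_V V v = V - {v}"

definition del_vertex_E :: "'a set set \<Rightarrow> 'a \<Rightarrow> 'a set set" where
  "del_vertex_E E v = {e \<in> E. v \<notin> e}"

definition attach_V :: "nat \<Rightarrow> 'a set \<Rightarrow> (nat \<Rightarrow> 'a set) \<Rightarrow> 'a set" where
  "attach_V n V Vs = V \<union> (\<Union>i\<in>{1..n}. Vs i)"

definition attach_E :: "nat \<Rightarrow> 'a set set \<Rightarrow> (nat \<Rightarrow> 'a set set) \<Rightarrow> 'a set set" where
  "attach_E n E Es = E \<union> (\<Union>i\<in>{1..n}. Es i)"

end

theory Submission
  imports Defs
begin



lemma edge2: "card e = 2 \<Longrightarrow> \<exists>a b. e = {a,b} \<and> a \<noteq> b"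
  by (auto simp: card_2_iff)

lemma mis_iff:
  assumes "\<forall>e\<in>E. card e = 2"
  shows "maximal_independent_set V E S \<longleftrightarrow> independent_set V E S \<and> (\<forall>v\<in>V-S. \<exists>u\<in>S. {u,v}\<in>E)"
proof
  assume m: "maximal_independent_set V E S"
  hence i: "independent_set V E S" by (simp add: maximal_independent_set_def)
  have "\<exists>u\<in>S. {u,v}\<in>E" if v: "v \<in> V - S" for v
  proof (rule ccontr)
    assume nu: "\<not> (\<exists>u\<in>S. {u,v}\<in>E)"
    have "independent_set V E (insert v S)"
      unfolding independent_set_def
    proof (intro conjI ballI)
      show "insert v S \<subseteq> V" using v i by (auto simp: independent_set_def)
    next
      fix e assume e: "e \<in> E"
      show "\<not> e \<subseteq> insert v S"
      proof
        assume es: "e \<subseteq> insert v S"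
        obtain a b where ab: "e = {a,b}" "a \<noteq> b" using edge2 assms e by blast
        show False
        proof (cases "v \<in> e")
          case True
          show ?thesis
          proof (cases "a = v")
            case True
            then have "b \<in> S" using ab es by auto
            moreover have "{b,v} \<in> E" using ab e True by (simp add: insert_commute)
            ultimately show ?thesis using nu by blast
          next
            case False
            then have "b = v" "a \<in> S" using ab es \<open>v \<in> e\<close> by auto
            then show ?thesis using ab e nu by blast
          qed
        next
          case False
          then show ?thesis using e es i by (auto simp: independent_set_def)
        qed
      qed
    qed
    then have "insert v S = S" using m unfolding maximal_independent_set_def by blast
    then show False using v by blast
  qed
  then show "independent_set V E S \<and> (\<forall>v\<in>V-S. \<exists>u\<in>S. {u,v}\<in>E)" using i by blast
next
  assume a: "independent_set V E S \<and> (\<forall>v\<in>V-S. \<exists>u\<in>S. {u,v}\<in>E)"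
  show "maximal_independent_set V E S"
    unfolding maximal_independent_set_def
  proof (intro conjI allI impI)
    show "independent_set V E S" using a by blast
    fix T assume T: "independent_set V E T \<and> S \<subseteq> T"
    show "T = S"
    proof (rule ccontr)
      assume "T \<noteq> S"
      then obtain v where v: "v \<in> T" "v \<notin> S" using T by blast
      then have "v \<in> V - S" using T by (auto simp: independent_set_def)
      then obtain u where "u \<in> S" "{u,v} \<in> E" using a by blast
      then show False using T v by (auto simp: independent_set_def)
    qed
  qed
qed

lemma extend_mis:
  assumes "finite V" "independent_set V E S"
  shows "\<exists>M. S \<subseteq> M \<and> maximal_independent_set V E M"
  using assms(2)
proof (induction "card (V - S)" arbitrary: S rule: less_induct)
  case less
  show ?case
  proof (cases "maximal_independent_set V E S")
    case True then show ?thesis by blast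
  next
    case False
    then obtain T where T: "independent_set V E T" "S \<subseteq> T" "T \<noteq> S"
      using less.prems by (auto simp: maximal_independent_set_def)
    have "card (V - T) < card (V - S)"
      using T assms(1) by (intro psubset_card_mono) (auto simp: independent_set_def)
    then obtain M where "T \<subseteq> M" "maximal_independent_set V E M" using less T by blast
    then show ?thesis using T by blast
  qed
qed

lemma nbr:
  assumes "simple_graph V E" "connected_graph V E" "x \<in> V" "card V \<ge> 2"
  shows "\<exists>y. {x,y} \<in> E \<and> y \<in> V \<and> y \<noteq> x"
proof -
  have "V - {x} \<noteq> {}"
  proof
    assume "V - {x} = {}"
    then have "V \<subseteq> {x}" by blast
    then have "card V \<le> card {x}" by (intro card_mono) simp_all
    then show False using assms(4) by simp
  qed
  then obtain v where v: "v \<in> V" "v \<noteq> x" by blast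
  define R where "R = (\<lambda>a b. adjacent E a b \<and> a \<in> V \<and> b \<in> V)"
  have "R\<^sup>*\<^sup>* x v" using assms(2,3) v unfolding connected_graph_def R_def by blast
  then have "\<exists>y. R x y" using v(2) by (induct rule: converse_rtranclp_induct) blast+
  then obtain y where "R x y" by blast
  then have y: "{x,y} \<in> E" "y \<in> V" unfolding R_def adjacent_def by blast+
  have "card {x,y} = 2" using y(1) assms(1) unfolding simple_graph_def by blast
  then have "y \<noteq> x" by auto
  then show ?thesis using y by blast
qed

lemma W_exists:
  assumes "simple_graph V E" "connected_graph V E" "x \<in> V" "card V \<ge> 2"
  shows "\<exists>W y. {x,y} \<in> E \<and> y \<in> W \<and> maximal_independent_set (V - {x}) (del_vertex_E E x) W
               \<and> maximal_independent_set V E W"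
proof -
  obtain y where y: "{x,y} \<in> E" "y \<in> V" "y \<noteq> x" using nbr[OF assms] by blast
  have c2: "\<forall>e\<in>E. card e = 2" using assms(1) by (simp add: simple_graph_def)
  have c2': "\<forall>e\<in>del_vertex_E E x. card e = 2" using c2 by (simp add: del_vertex_E_def)
  have "independent_set (V - {x}) (del_vertex_E E x) {y}"
    using y c2' unfolding independent_set_def by (auto dest!: bspec[OF c2'] simp: subset_singleton_iff)
  then obtain W where W: "{y} \<subseteq> W" "maximal_independent_set (V - {x}) (del_vertex_E E x) W"
  proof -
    have "finite (V - {x})" using assms(1) by (simp add: simple_graph_def)
    then show ?thesis using that extend_mis[of "V - {x}" "del_vertex_E E x" "{y}"]
      \<open>independent_set (V - {x}) (del_vertex_E E x) {y}\<close> by blast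
  qed
  have "maximal_independent_set V E W"
    unfolding mis_iff[OF c2]
  proof
    have iW: "independent_set (V - {x}) (del_vertex_E E x) W" using W(2) by (simp add: maximal_independent_set_def)
    show "independent_set V E W" using iW by (auto simp: independent_set_def del_vertex_E_def)
    show "\<forall>v\<in>V - W. \<exists>u\<in>W. {u, v} \<in> E"
    proof
      fix v assume v: "v \<in> V - W"
      show "\<exists>u\<in>W. {u, v} \<in> E"
      proof (cases "v = x")
        case True then show ?thesis using W(1) y by (auto simp: insert_commute)
      next
        case False
        then have "v \<in> (V - {x}) - W" using v by blast
        then show ?thesis using W(2) unfolding mis_iff[OF c2'] by (auto simp: del_vertex_E_def)
      qed
    qed
  qed
  then show ?thesis using W y by blast
qed

lemma U_exists:
  assumes "simple_graph V E" "x \<in> V"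
  shows "\<exists>U. x \<in> U \<and> maximal_independent_set V E U"
proof -
  have "independent_set V E {x}"
    using assms unfolding independent_set_def simple_graph_def by (auto simp: subset_singleton_iff)
  then show ?thesis using extend_mis[of V E "{x}"] assms(1) by (auto simp: simple_graph_def)
qed



locale att =
  fixes n :: nat and x :: "nat \<Rightarrow> 'a" and E :: "'a set set"
    and Vs :: "nat \<Rightarrow> 'a set" and Es :: "nat \<Rightarrow> 'a set set"
  assumes x_inj: "inj_on x {1..n}"
    and G: "simple_graph (x ` {1..n}) E"
    and G_noiso: "no_isolated_vertex (x ` {1..n}) E"
    and Gi: "\<And>i. i \<in> {1..n} \<Longrightarrow> simple_graph (Vs i) (Es i)"
    and Gi_conn: "\<And>i. i \<in> {1..n} \<Longrightarrow> connected_graph (Vs i) (Es i)"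
    and root: "\<And>i. i \<in> {1..n} \<Longrightarrow> x i \<in> Vs i"
    and size: "\<And>i. i \<in> {1..n} \<Longrightarrow> card (Vs i) \<ge> 2"
    and disj: "\<And>i j. i \<in> {1..n} \<Longrightarrow> j \<in> {1..n} \<Longrightarrow> i \<noteq> j \<Longrightarrow>
                  (Vs i - {x i}) \<inter> (Vs j - {x j}) = {}"
    and disjG: "\<And>i. i \<in> {1..n} \<Longrightarrow> (Vs i - {x i}) \<inter> x ` {1..n} = {}"
begin

abbreviation "I \<equiv> {1..n}"
abbreviation "VH \<equiv> attach_V n (x ` {1..n}) Vs"
abbreviation "EH \<equiv> attach_E n E Es"

lemma F1: "k \<in> I \<Longrightarrow> l \<in> I \<Longrightarrow> x k \<in> Vs l \<Longrightarrow> k = l"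
proof (rule ccontr)
  assume a: "k \<in> I" "l \<in> I" "x k \<in> Vs l" "k \<noteq> l"
  then have "x k \<noteq> x l" using x_inj by (meson inj_onD)
  then have "x k \<in> (Vs l - {x l}) \<inter> x ` I" using a by blast
  then show False using disjG[OF a(2)] by blast
qed

lemma F2: "k \<in> I \<Longrightarrow> l \<in> I \<Longrightarrow> k \<noteq> l \<Longrightarrow> Vs k \<inter> Vs l = {}"
proof (rule ccontr)
  assume a: "k \<in> I" "l \<in> I" "k \<noteq> l" "Vs k \<inter> Vs l \<noteq> {}"
  then obtain v where v: "v \<in> Vs k" "v \<in> Vs l" by blast
  show False
  proof (cases "v = x k \<or> v = x l")
    case True then show ?thesis using F1 a v by metis
  next
    case False then show ?thesis using disj[OF a(1,2,3)] v by blast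
  qed
qed

lemma VH_eq: "VH = (\<Union>k\<in>I. Vs k)" using root by (auto simp: attach_V_def)

lemma EH_c2: "\<forall>e\<in>EH. card e = 2"
  using G Gi by (auto simp: attach_E_def simple_graph_def)

lemma finVs: "k \<in> I \<Longrightarrow> finite (Vs k)" using Gi by (simp add: simple_graph_def)

lemma Es_sub: "k \<in> I \<Longrightarrow> e \<in> Es k \<Longrightarrow> e \<subseteq> Vs k" using Gi by (simp add: simple_graph_def)

lemma c2k: "k \<in> I \<Longrightarrow> \<forall>e\<in>Es k. card e = 2" using Gi by (simp add: simple_graph_def)

lemma c2d: "k \<in> I \<Longrightarrow> \<forall>e\<in>del_vertex_E (Es k) (x k). card e = 2"
  using Gi by (simp add: simple_graph_def del_vertex_E_def)

lemma edge_loc: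
  assumes "k \<in> I" "v \<in> Vs k" "v \<noteq> x k" "{u,v} \<in> EH"
  shows "{u,v} \<in> Es k"
proof -
  have "{u,v} \<notin> E"
  proof
    assume "{u,v} \<in> E"
    then have "v \<in> x ` I" using G by (auto simp: simple_graph_def)
    then show False using disjG[OF assms(1)] assms(2,3) by blast
  qed
  then obtain l where l: "l \<in> I" "{u,v} \<in> Es l" using assms(4) by (auto simp: attach_E_def)
  then have "v \<in> Vs l" using Es_sub by blast
  then have "l = k" using F2 l(1) assms(1,2) by blast
  then show ?thesis using l by simp
qed

lemma gen:
  assumes sub: "\<And>k. k\<in>I \<Longrightarrow> P k \<subseteq> Vs k"
    and ind: "\<And>k e. k\<in>I \<Longrightarrow> e \<in> Es k \<Longrightarrow> \<not> e \<subseteq> P k"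
    and dom: "\<And>k v. k\<in>I \<Longrightarrow> v \<in> Vs k \<Longrightarrow> v \<noteq> x k \<Longrightarrow> v \<notin> P k \<Longrightarrow> \<exists>u\<in>P k. {u,v}\<in>Es k"
    and domx: "\<And>k. k\<in>I \<Longrightarrow> x k \<notin> P k \<Longrightarrow>
          (\<exists>u\<in>P k. {u,x k}\<in>Es k) \<or> (\<exists>j\<in>I. x j \<in> P j \<and> {x j, x k} \<in> E)"
    and noE: "\<And>k l. k\<in>I \<Longrightarrow> l\<in>I \<Longrightarrow> x k \<in> P k \<Longrightarrow> x l \<in> P l \<Longrightarrow> {x k, x l} \<notin> E"
  shows "maximal_independent_set VH EH (\<Union>k\<in>I. P k)"
    and "card (\<Union>k\<in>I. P k) = (\<Sum>k\<in>I. card (P k))"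
proof -
  let ?S = "\<Union>k\<in>I. P k"
  have SV: "?S \<inter> Vs k = P k" if k: "k \<in> I" for k
  proof
    show "P k \<subseteq> ?S \<inter> Vs k" using sub k by blast
    show "?S \<inter> Vs k \<subseteq> P k"
    proof
      fix v assume "v \<in> ?S \<inter> Vs k"
      then obtain l where l: "l \<in> I" "v \<in> P l" "v \<in> Vs k" by blast
      then have "l = k" using F2[OF l(1) k] sub[OF l(1)] by blast
      then show "v \<in> P k" using l by simp
    qed
  qed
  have xin: "x k \<in> P k" if "k \<in> I" "x k \<in> ?S" for k
    using SV[OF that(1)] root[OF that(1)] that(2) by blast
  show "maximal_independent_set VH EH ?S"
    unfolding mis_iff[OF EH_c2]
  proof
    show "independent_set VH EH ?S"
      unfolding independent_set_def
    proof (intro conjI ballI)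
      show "?S \<subseteq> VH" using sub VH_eq by blast
    next
      fix e assume e: "e \<in> EH"
      show "\<not> e \<subseteq> ?S"
      proof
        assume es: "e \<subseteq> ?S"
        show False
        proof (cases "e \<in> E")
          case True
          have eI: "e \<subseteq> x ` I" "card e = 2" using G True by (auto simp: simple_graph_def)
          then obtain a b where ab0: "e = {a,b}" "a \<noteq> b" using edge2 by blast
          then have ab: "e = {a,b}" "a \<noteq> b" "a \<in> x ` I" "b \<in> x ` I" using eI by auto
          then obtain k l where kl: "k \<in> I" "l \<in> I" "a = x k" "b = x l" by blast
          then have "x k \<in> P k" "x l \<in> P l" using xin es ab by auto
          then show False using noE[OF kl(1,2)] True ab kl by simp
        next
          case False
          then obtain k where k: "k \<in> I" "e \<in> Es k" using e by (auto simp: attach_E_def)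
          then have "e \<subseteq> ?S \<inter> Vs k" using es Es_sub by blast
          then show False using SV[OF k(1)] ind[OF k] by (metis le_inf_iff)
        qed
      qed
    qed
    show "\<forall>v\<in>VH - ?S. \<exists>u\<in>?S. {u, v} \<in> EH"
    proof
      fix v assume v: "v \<in> VH - ?S"
      then obtain k where k: "k \<in> I" "v \<in> Vs k" using VH_eq by blast
      have vP: "v \<notin> P k" using v k by blast
      show "\<exists>u\<in>?S. {u, v} \<in> EH"
      proof (cases "v = x k")
        case True
        then consider "\<exists>u\<in>P k. {u,x k}\<in>Es k" | "\<exists>j\<in>I. x j \<in> P j \<and> {x j, x k} \<in> E"
          using domx[OF k(1)] vP by blast
        then show ?thesis
        proof cases
          case 1
          then obtain u where "u \<in> P k" "{u, x k} \<in> Es k" by blast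
          then have "u \<in> ?S" "{u, v} \<in> EH" using k True by (auto simp: attach_E_def)
          then show ?thesis by blast
        next
          case 2
          then obtain j where "j \<in> I" "x j \<in> P j" "{x j, x k} \<in> E" by blast
          then have "x j \<in> ?S" "{x j, v} \<in> EH" using True by (auto simp: attach_E_def)
          then show ?thesis by blast
        qed
      next
        case False
        then obtain u where "u \<in> P k" "{u, v} \<in> Es k" using dom[OF k False vP] by blast
        then have "u \<in> ?S" "{u, v} \<in> EH" using k by (auto simp: attach_E_def)
        then show ?thesis by blast
      qed
    qed
  qed
  show "card ?S = (\<Sum>k\<in>I. card (P k))"
  proof (rule card_UN_disjoint)
    show "finite I" by simp
    show "\<forall>i\<in>I. finite (P i)" using sub finVs finite_subset by blast
    show "\<forall>i\<in>I. \<forall>j\<in>I. i \<noteq> j \<longrightarrow> P i \<inter> P j = {}" using sub F2 by blast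
  qed
qed

lemma restr:
  assumes S: "maximal_independent_set VH EH S" and k: "k \<in> I"
  shows "x k \<in> S \<Longrightarrow> maximal_independent_set (Vs k) (Es k) (S \<inter> Vs k)"
    and "x k \<notin> S \<Longrightarrow> maximal_independent_set (Vs k - {x k}) (del_vertex_E (Es k) (x k)) (S \<inter> Vs k)"
proof -
  have iS: "independent_set VH EH S" and dS: "\<forall>v\<in>VH - S. \<exists>u\<in>S. {u, v} \<in> EH"
    using S unfolding mis_iff[OF EH_c2] by auto
  have VkH: "Vs k \<subseteq> VH" using VH_eq k by blast
  have dom: "\<exists>u\<in>S \<inter> Vs k. {u,v} \<in> Es k" if vv: "v \<in> Vs k" "v \<noteq> x k" "v \<notin> S" for v
  proof -
    have "v \<in> VH - S" using vv VkH by blast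
    then obtain u where u: "u \<in> S" "{u,v} \<in> EH" using dS by blast
    then have "{u,v} \<in> Es k" using edge_loc[OF k vv(1,2)] by blast
    then have "u \<in> Vs k" using Es_sub[OF k] by blast
    then show ?thesis using u \<open>{u,v} \<in> Es k\<close> by blast
  qed
  have indk: "\<not> e \<subseteq> S \<inter> Vs k" if "e \<in> Es k" for e
  proof -
    have "e \<in> EH" using that k unfolding attach_E_def by blast
    then show ?thesis using iS unfolding independent_set_def by blast
  qed
  show "maximal_independent_set (Vs k) (Es k) (S \<inter> Vs k)" if xs: "x k \<in> S"
    unfolding mis_iff[OF c2k[OF k]] independent_set_def
  proof (intro conjI ballI)
    show "S \<inter> Vs k \<subseteq> Vs k" by blast
    show "\<not> e \<subseteq> S \<inter> Vs k" if "e \<in> Es k" for e using indk that by blast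
    fix v assume v: "v \<in> Vs k - S \<inter> Vs k"
    then have "v \<noteq> x k" "v \<in> Vs k" "v \<notin> S" using xs by auto
    then show "\<exists>u\<in>S \<inter> Vs k. {u, v} \<in> Es k" using dom by blast
  qed
  show "maximal_independent_set (Vs k - {x k}) (del_vertex_E (Es k) (x k)) (S \<inter> Vs k)" if xs: "x k \<notin> S"
    unfolding mis_iff[OF c2d[OF k]] independent_set_def
  proof (intro conjI ballI)
    show "S \<inter> Vs k \<subseteq> Vs k - {x k}" using xs by blast
    show "\<not> e \<subseteq> S \<inter> Vs k" if "e \<in> del_vertex_E (Es k) (x k)" for e
    proof -
      have "e \<in> Es k" using that unfolding del_vertex_E_def by blast
      then show ?thesis using indk by blast
    qed
    fix v assume v: "v \<in> Vs k - {x k} - S \<inter> Vs k"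
    then have "v \<noteq> x k" "v \<in> Vs k" "v \<notin> S" by auto
    then obtain u where "u \<in> S \<inter> Vs k" "{u,v} \<in> Es k" using dom by blast
    then show "\<exists>u\<in>S \<inter> Vs k. {u, v} \<in> del_vertex_E (Es k) (x k)"
      using v xs by (auto simp: del_vertex_E_def)
  qed
qed


lemma sum_split:
  assumes "i \<in> I"
  shows "(\<Sum>k\<in>I. card (if k = i then T else Q k)) = card T + (\<Sum>k\<in>I-{i}. card (Q k))"
proof -
  have "(\<Sum>k\<in>I. card (if k = i then T else Q k)) = card T + (\<Sum>k\<in>I-{i}. card (if k = i then T else Q k))"
    using sum.remove[of I i "\<lambda>k. card (if k = i then T else Q k)"] assms by simp
  also have "(\<Sum>k\<in>I-{i}. card (if k = i then T else Q k)) = (\<Sum>k\<in>I-{i}. card (Q k))"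
    by (rule sum.cong) auto
  finally show ?thesis .
qed

lemma card_decomp:
  assumes "S \<subseteq> VH"
  shows "card S = (\<Sum>k\<in>I. card (S \<inter> Vs k))"
proof -
  have eq: "S = (\<Union>k\<in>I. S \<inter> Vs k)" using assms VH_eq by blast
  have "card (\<Union>k\<in>I. S \<inter> Vs k) = (\<Sum>k\<in>I. card (S \<inter> Vs k))"
  proof (rule card_UN_disjoint)
    show "finite I" by simp
    show "\<forall>i\<in>I. finite (S \<inter> Vs i)" using finVs by blast
    show "\<forall>i\<in>I. \<forall>j\<in>I. i \<noteq> j \<longrightarrow> (S \<inter> Vs i) \<inter> (S \<inter> Vs j) = {}" using F2 by blast
  qed
  then show ?thesis using arg_cong[OF eq, of card] by (rule trans[rotated])
qed

lemma main: "unmixed VH EH \<longleftrightarrow> (\<forall>i\<in>I. unmixed (Vs i) (Es i) \<and>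
             unmixed (del_vertex_V (Vs i) (x i)) (del_vertex_E (Es i) (x i)))"
proof
  assume R: "\<forall>i\<in>I. unmixed (Vs i) (Es i) \<and>
             unmixed (del_vertex_V (Vs i) (x i)) (del_vertex_E (Es i) (x i))"
  show "unmixed VH EH"
    unfolding unmixed_def
  proof (intro allI impI)
    fix S T assume ST: "maximal_independent_set VH EH S \<and> maximal_independent_set VH EH T"
    have eqk: "card (S \<inter> Vs k) = card (T \<inter> Vs k)" if k: "k \<in> I" for k
    proof -
      obtain W y where W: "maximal_independent_set (Vs k - {x k}) (del_vertex_E (Es k) (x k)) W"
        "maximal_independent_set (Vs k) (Es k) W"
        using W_exists[OF Gi[OF k] Gi_conn[OF k] root[OF k] size[OF k]] by blast
      have u1: "unmixed (Vs k) (Es k)" and u2: "unmixed (Vs k - {x k}) (del_vertex_E (Es k) (x k))"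
        using R k by (auto simp: del_vertex_V_def)
      have cA: "card (A \<inter> Vs k) = card W" if A: "maximal_independent_set VH EH A" for A
      proof (cases "x k \<in> A")
        case True
        then show ?thesis using restr(1)[OF A k] u1 W(2) unfolding unmixed_def by blast
      next
        case False
        then show ?thesis using restr(2)[OF A k] u2 W(1) unfolding unmixed_def by blast
      qed
      then show ?thesis using cA[of S] cA[of T] ST by simp
    qed
    have "S \<subseteq> VH" "T \<subseteq> VH" using ST by (auto simp: maximal_independent_set_def independent_set_def)
    then have "card S = (\<Sum>k\<in>I. card (S \<inter> Vs k))" "card T = (\<Sum>k\<in>I. card (T \<inter> Vs k))"
      using card_decomp by blast+
    moreover have "(\<Sum>k\<in>I. card (S \<inter> Vs k)) = (\<Sum>k\<in>I. card (T \<inter> Vs k))"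
      by (rule sum.cong) (simp_all add: eqk)
    ultimately show "card S = card T" by simp
  qed
next
  assume U: "unmixed VH EH"
  have ex: "\<forall>k\<in>I. \<exists>W. maximal_independent_set (Vs k - {x k}) (del_vertex_E (Es k) (x k)) W \<and>
                (\<exists>y. {x k, y} \<in> Es k \<and> y \<in> W)"
  proof
    fix k assume k: "k \<in> I"
    show "\<exists>W. maximal_independent_set (Vs k - {x k}) (del_vertex_E (Es k) (x k)) W \<and>
                (\<exists>y. {x k, y} \<in> Es k \<and> y \<in> W)"
      using W_exists[OF Gi[OF k] Gi_conn[OF k] root[OF k] size[OF k]] by blast
  qed
  obtain Wf where Wf: "\<And>k. k \<in> I \<Longrightarrow> maximal_independent_set (Vs k - {x k}) (del_vertex_E (Es k) (x k)) (Wf k)"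
    "\<And>k. k \<in> I \<Longrightarrow> \<exists>y. {x k, y} \<in> Es k \<and> y \<in> Wf k"
    using bchoice[OF ex] by blast
  have Wsub: "Wf k \<subseteq> Vs k - {x k}" if "k \<in> I" for k
    using Wf(1)[OF that] by (simp add: maximal_independent_set_def independent_set_def)
  have Wind: "\<not> e \<subseteq> Wf k" if "k \<in> I" "e \<in> Es k" for k e
  proof
    assume "e \<subseteq> Wf k"
    then have "e \<in> del_vertex_E (Es k) (x k)" using Wsub[OF that(1)] that(2) by (auto simp: del_vertex_E_def)
    then show False using Wf(1)[OF that(1)] \<open>e \<subseteq> Wf k\<close>
      by (simp add: maximal_independent_set_def independent_set_def)
  qed
  have Wdom: "\<exists>u\<in>Wf k. {u,v} \<in> Es k" if "k \<in> I" "v \<in> Vs k" "v \<noteq> x k" "v \<notin> Wf k" for k v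
  proof -
    have "v \<in> Vs k - {x k} - Wf k" using that by blast
    then show ?thesis using Wf(1)[OF that(1)] unfolding mis_iff[OF c2d[OF that(1)]]
      by (auto simp: del_vertex_E_def)
  qed
  have noloop: "{a, a} \<notin> E" for a
    using G by (auto simp: simple_graph_def)
  show "\<forall>i\<in>I. unmixed (Vs i) (Es i) \<and>
             unmixed (del_vertex_V (Vs i) (x i)) (del_vertex_E (Es i) (x i))"
  proof
    fix i assume i: "i \<in> I"
    have partA: "maximal_independent_set VH EH (\<Union>k\<in>I. (if k = i then T else Wf k)) \<and>
       card (\<Union>k\<in>I. (if k = i then T else Wf k)) = card T + (\<Sum>k\<in>I-{i}. card (Wf k))"
      if T: "maximal_independent_set (Vs i) (Es i) T" for T
    proof -
      have iT: "independent_set (Vs i) (Es i) T" and dT: "\<forall>v\<in>Vs i - T. \<exists>u\<in>T. {u,v} \<in> Es i"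
        using T unfolding mis_iff[OF c2k[OF i]] by auto
      let ?P = "\<lambda>k. if k = i then T else Wf k"
      have g: "maximal_independent_set VH EH (\<Union>k\<in>I. ?P k) \<and> card (\<Union>k\<in>I. ?P k) = (\<Sum>k\<in>I. card (?P k))"
      proof -
        have h1: "?P k \<subseteq> Vs k" if "k \<in> I" for k using iT Wsub[OF that] by (auto simp: independent_set_def)
        have h2: "\<not> e \<subseteq> ?P k" if "k \<in> I" "e \<in> Es k" for k e
          using iT Wind[OF that] that by (auto simp: independent_set_def)
        have h3: "\<exists>u\<in>?P k. {u,v}\<in>Es k" if "k \<in> I" "v \<in> Vs k" "v \<noteq> x k" "v \<notin> ?P k" for k v
        proof (cases "k = i")
          case True then show ?thesis using dT that by auto
        next
          case False then show ?thesis using Wdom[OF that(1-3)] that(4) by simp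
        qed
        have h4: "(\<exists>u\<in>?P k. {u,x k}\<in>Es k) \<or> (\<exists>j\<in>I. x j \<in> ?P j \<and> {x j, x k} \<in> E)"
          if kI: "k \<in> I" "x k \<notin> ?P k" for k
        proof (cases "k = i")
          case True then show ?thesis using dT that root by auto
        next
          case False
          then obtain y where "{x k, y} \<in> Es k" "y \<in> Wf k" using Wf(2)[OF kI(1)] by blast
          then have "{y, x k} \<in> Es k" "y \<in> ?P k" using False by (simp_all add: insert_commute)
          then show ?thesis by blast
        qed
        have h5: "{x k, x l} \<notin> E" if "k \<in> I" "l \<in> I" "x k \<in> ?P k" "x l \<in> ?P l" for k l
        proof -
          have "k = i"
          proof (rule ccontr)
            assume "k \<noteq> i" then have "x k \<in> Wf k" using that(3) by simp
            then show False using Wsub[OF that(1)] by blast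
          qed
          moreover have "l = i"
          proof (rule ccontr)
            assume "l \<noteq> i" then have "x l \<in> Wf l" using that(4) by simp
            then show False using Wsub[OF that(2)] by blast
          qed
          ultimately show ?thesis using noloop by simp
        qed
        show ?thesis using gen[OF h1 h2 h3 h4 h5] by blast
      qed
      then show ?thesis using sum_split[OF i, of T Wf] by simp
    qed
    have "unmixed (Vs i) (Es i)"
      unfolding unmixed_def
    proof (intro allI impI)
      fix S T assume "maximal_independent_set (Vs i) (Es i) S \<and> maximal_independent_set (Vs i) (Es i) T"
      then have a: "maximal_independent_set VH EH (\<Union>k\<in>I. (if k = i then S else Wf k)) \<and> card (\<Union>k\<in>I. (if k = i then S else Wf k)) = card S + (\<Sum>k\<in>I-{i}. card (Wf k))"
        and b: "maximal_independent_set VH EH (\<Union>k\<in>I. (if k = i then T else Wf k)) \<and> card (\<Union>k\<in>I. (if k = i then T else Wf k)) = card T + (\<Sum>k\<in>I-{i}. card (Wf k))"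
        using partA by blast+
      have "card (\<Union>k\<in>I. (if k = i then S else Wf k)) = card (\<Union>k\<in>I. (if k = i then T else Wf k))"
        using U a b unfolding unmixed_def by blast
      then have "card S + (\<Sum>k\<in>I-{i}. card (Wf k)) = card T + (\<Sum>k\<in>I-{i}. card (Wf k))" using a b by simp
      then show "card S = card T" by simp
    qed
    moreover
    obtain e where e: "e \<in> E" "x i \<in> e" using G_noiso i unfolding no_isolated_vertex_def by blast
    have eI: "e \<subseteq> x ` I" "card e = 2" using G e(1) by (auto simp: simple_graph_def)
    then obtain a b where ab: "e = {a,b}" "a \<noteq> b" using edge2 by blast
    have j0: "\<exists>j\<in>I. j \<noteq> i \<and> {x i, x j} \<in> E"
    proof (cases "a = x i")
      case True
      then have "b \<in> x ` I" using ab eI by auto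
      then obtain j where "j \<in> I" "b = x j" by blast
      then show ?thesis using True ab e(1) by auto
    next
      case False
      then have "b = x i" using ab e(2) by auto
      have "a \<in> x ` I" using ab eI by auto
      then obtain j where "j \<in> I" "a = x j" by blast
      moreover have "{x i, a} = e" using ab \<open>b = x i\<close> by auto
      ultimately show ?thesis using False ab e(1) by auto
    qed
    then obtain j where j: "j \<in> I" "j \<noteq> i" "{x i, x j} \<in> E" by blast
    obtain Uj where Uj: "x j \<in> Uj" "maximal_independent_set (Vs j) (Es j) Uj"
      using U_exists[OF Gi[OF j(1)] root[OF j(1)]] by blast
    have iU: "independent_set (Vs j) (Es j) Uj" and dU: "\<forall>v\<in>Vs j - Uj. \<exists>u\<in>Uj. {u,v} \<in> Es j"
      using Uj(2) unfolding mis_iff[OF c2k[OF j(1)]] by auto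
    let ?Q = "\<lambda>k. if k = j then Uj else Wf k"
    have partB: "maximal_independent_set VH EH (\<Union>k\<in>I. (if k = i then T else ?Q k)) \<and>
       card (\<Union>k\<in>I. (if k = i then T else ?Q k)) = card T + (\<Sum>k\<in>I-{i}. card (?Q k))"
      if T: "maximal_independent_set (Vs i - {x i}) (del_vertex_E (Es i) (x i)) T" for T
    proof -
      have iT: "independent_set (Vs i - {x i}) (del_vertex_E (Es i) (x i)) T"
        and dT: "\<forall>v\<in>(Vs i - {x i}) - T. \<exists>u\<in>T. {u,v} \<in> del_vertex_E (Es i) (x i)"
        using T unfolding mis_iff[OF c2d[OF i]] by auto
      have Tsub: "T \<subseteq> Vs i - {x i}" using iT by (simp add: independent_set_def)
      have Tind: "\<not> e \<subseteq> T" if "e \<in> Es i" for e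
      proof
        assume "e \<subseteq> T"
        then have "e \<in> del_vertex_E (Es i) (x i)" using Tsub that by (auto simp: del_vertex_E_def)
        then show False using iT \<open>e \<subseteq> T\<close> by (simp add: independent_set_def)
      qed
      let ?P = "\<lambda>k. if k = i then T else ?Q k"
      have g: "maximal_independent_set VH EH (\<Union>k\<in>I. ?P k) \<and> card (\<Union>k\<in>I. ?P k) = (\<Sum>k\<in>I. card (?P k))"
      proof -
        have h1: "?P k \<subseteq> Vs k" if "k \<in> I" for k using Tsub iU Wsub[OF that] by (auto simp: independent_set_def)
        have h2: "\<not> e \<subseteq> ?P k" if "k \<in> I" "e \<in> Es k" for k e
          using Tind iU Wind[OF that] that by (auto simp: independent_set_def)
        have h3: "\<exists>u\<in>?P k. {u,v}\<in>Es k" if "k \<in> I" "v \<in> Vs k" "v \<noteq> x k" "v \<notin> ?P k" for k v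
        proof (cases "k = i")
          case True
          then have "v \<in> (Vs i - {x i}) - T" using that by simp
          then obtain u where "u \<in> T" "{u,v} \<in> del_vertex_E (Es i) (x i)" using dT by blast
          then show ?thesis using True by (auto simp: del_vertex_E_def)
        next
          case False
          show ?thesis
          proof (cases "k = j")
            case True
            then have "v \<in> Vs j - Uj" using that False by simp
            then show ?thesis using dU True False by simp
          next
            case False2: False
            then show ?thesis using Wdom[OF that(1-3)] that(4) False by simp
          qed
        qed
        have h4: "(\<exists>u\<in>?P k. {u,x k}\<in>Es k) \<or> (\<exists>j\<in>I. x j \<in> ?P j \<and> {x j, x k} \<in> E)"
          if kI: "k \<in> I" "x k \<notin> ?P k" for k
        proof (cases "k = i")
          case True
          have "{x j, x k} \<in> E" using j True by (simp add: insert_commute)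
          moreover have "x j \<in> ?P j" using j Uj(1) by simp
          ultimately show ?thesis using j(1) by blast
        next
          case False
          show ?thesis
          proof (cases "k = j")
            case True then show ?thesis using False that Uj(1) by auto
          next
            case False2: False
            then obtain y where "{x k, y} \<in> Es k" "y \<in> Wf k" using Wf(2)[OF kI(1)] by blast
            then have "{y, x k} \<in> Es k" "y \<in> ?P k" using False False2 by (simp_all add: insert_commute)
            then show ?thesis by blast
          qed
        qed
        have h5: "{x k, x l} \<notin> E" if "k \<in> I" "l \<in> I" "x k \<in> ?P k" "x l \<in> ?P l" for k l
        proof -
          have kj: "k = j" if "k \<in> I" "x k \<in> ?P k" for k
          proof (rule ccontr)
            assume nj: "k \<noteq> j"
            show False
            proof (cases "k = i")
              case True then show False using that(2) Tsub by auto
            next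
              case False then have "x k \<in> Wf k" using that(2) nj by simp
              then show False using Wsub[OF that(1)] by blast
            qed
          qed
          have "k = j" using kj that(1,3) by blast
          moreover have "l = j" using kj that(2,4) by blast
          ultimately show ?thesis using noloop by simp
        qed
        show ?thesis using gen[OF h1 h2 h3 h4 h5] by blast
      qed
      then show ?thesis using sum_split[OF i, of T ?Q] by simp
    qed
    have "unmixed (del_vertex_V (Vs i) (x i)) (del_vertex_E (Es i) (x i))"
      unfolding unmixed_def del_vertex_V_def
    proof (intro allI impI)
      fix S T assume "maximal_independent_set (Vs i - {x i}) (del_vertex_E (Es i) (x i)) S \<and>
          maximal_independent_set (Vs i - {x i}) (del_vertex_E (Es i) (x i)) T"
      then have a: "maximal_independent_set VH EH (\<Union>k\<in>I. (if k = i then S else ?Q k)) \<and> card (\<Union>k\<in>I. (if k = i then S else ?Q k)) = card S + (\<Sum>k\<in>I-{i}. card (?Q k))"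
        and b: "maximal_independent_set VH EH (\<Union>k\<in>I. (if k = i then T else ?Q k)) \<and> card (\<Union>k\<in>I. (if k = i then T else ?Q k)) = card T + (\<Sum>k\<in>I-{i}. card (?Q k))"
        using partB by blast+
      have "card (\<Union>k\<in>I. (if k = i then S else ?Q k)) = card (\<Union>k\<in>I. (if k = i then T else ?Q k))"
        using U a b unfolding unmixed_def by blast
      then have "card S + (\<Sum>k\<in>I-{i}. card (?Q k)) = card T + (\<Sum>k\<in>I-{i}. card (?Q k))" using a b by simp
      then show "card S = card T" by simp
    qed
    ultimately show "unmixed (Vs i) (Es i) \<and>
             unmixed (del_vertex_V (Vs i) (x i)) (del_vertex_E (Es i) (x i))" by blast
  qed
qed

end

theorem proposition3p2:
  fixes n :: nat and x :: "nat \<Rightarrow> 'a" and E :: "'a set set"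
    and Vs :: "nat \<Rightarrow> 'a set" and Es :: "nat \<Rightarrow> 'a set set"
  assumes x_inj: "inj_on x {1..n}"
    and G: "simple_graph (x ` {1..n}) E"
    and G_noiso: "no_isolated_vertex (x ` {1..n}) E"
    and Gi: "\<And>i. i \<in> {1..n} \<Longrightarrow> simple_graph (Vs i) (Es i)"
    and Gi_conn: "\<And>i. i \<in> {1..n} \<Longrightarrow> connected_graph (Vs i) (Es i)"
    and root: "\<And>i. i \<in> {1..n} \<Longrightarrow> x i \<in> Vs i"
    and size: "\<And>i. i \<in> {1..n} \<Longrightarrow> card (Vs i) \<ge> 2"
    and disj: "\<And>i j. i \<in> {1..n} \<Longrightarrow> j \<in> {1..n} \<Longrightarrow> i \<noteq> j \<Longrightarrow>
                  (Vs i - {x i}) \<inter> (Vs j - {x j}) = {}"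
    and disjG: "\<And>i. i \<in> {1..n} \<Longrightarrow> (Vs i - {x i}) \<inter> x ` {1..n} = {}"
  shows "unmixed (attach_V n (x ` {1..n}) Vs) (attach_E n E Es) \<longleftrightarrow>
         (\<forall>i\<in>{1..n}. unmixed (Vs i) (Es i) \<and>
             unmixed (del_vertex_V (Vs i) (x i)) (del_vertex_E (Es i) (x i)))"
proof -
  have "att n x E Vs Es" unfolding att_def using assms by blast
  then show ?thesis by (rule att.main)
qed

end
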